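(* Let $p>2$ and $\alpha=pc$ with $c\in\Delta_p^0$. Let $0<a<1$, and let $\xi_1,\xi_2$ be independent random variables with values in $\Delta_p$ with distributions $\mu_1=a\,m_{\Delta_p}+(1-a)\,m_{p\Delta_p}$ and $\mu_2=m_{\Delta_p}$. Then the conditional distribution of $L_2=\xi_1+\alpha\xi_2$ given $L_1=\xi_1+\xi_2$ is symmetric (while $\mu_1$ is not an idempotent distribution).
   Context: $\Delta_p$ is the compact group of $p$-adic integers, $p\Delta_p$ its subgroup of elements divisible by $p$, $\Delta_p^0$ the invertible $p$-adic integers; $\alpha$ acts by multiplication. $m_K$ is the Haar probability measure of a compact subgroup $K$. An idempotent distribution is a shift $m_K*E_x$ of a Haar distribution of a compact subgroup. The conditional distribution of $L_2$ given $L_1$ is symmetric if it equals the conditional distribution of $-L_2$ given $L_1$. *)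

theory Defs
  imports "HOL-Probability.Probability"
begin

text \<open>The p-adic integers are modelled as the inverse limit of the rings Z/p^n Z:
  compatible sequences of residues x n in {0..<p^n}. They live inside the type
  nat => int, which carries the product topology of discrete spaces; its subspace
  topology on the carrier is the p-adic topology, and measures use the Borel sets.\<close>

definition Zp :: "int \<Rightarrow> (nat \<Rightarrow> int) set" where
  "Zp p = {x. \<forall>n. 0 \<le> x n \<and> x n < p ^ n \<and> x (Suc n) mod p ^ n = x n}"

definition padd :: "int \<Rightarrow> (nat \<Rightarrow> int) \<Rightarrow> (nat \<Rightarrow> int) \<Rightarrow> (nat \<Rightarrow> int)" where
  "padd p x y = (\<lambda>n. (x n + y n) mod p ^ n)"

definition pneg :: "int \<Rightarrow> (nat \<Rightarrow> int) \<Rightarrow> (nat \<Rightarrow> int)" where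
  "pneg p x = (\<lambda>n. (- x n) mod p ^ n)"

definition pmult :: "int \<Rightarrow> (nat \<Rightarrow> int) \<Rightarrow> (nat \<Rightarrow> int) \<Rightarrow> (nat \<Rightarrow> int)" where
  "pmult p x y = (\<lambda>n. (x n * y n) mod p ^ n)"

definition pconst :: "int \<Rightarrow> int \<Rightarrow> (nat \<Rightarrow> int)" where
  "pconst p k = (\<lambda>n. k mod p ^ n)"

definition Zp_units :: "int \<Rightarrow> (nat \<Rightarrow> int) set" where
  "Zp_units p = {x \<in> Zp p. \<exists>y \<in> Zp p. pmult p x y = pconst p 1}"

definition pZp :: "int \<Rightarrow> (nat \<Rightarrow> int) set" where
  "pZp p = pmult p (pconst p p) ` Zp p"

definition compact_subgroup :: "int \<Rightarrow> (nat \<Rightarrow> int) set \<Rightarrow> bool" where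
  "compact_subgroup p K \<longleftrightarrow> K \<subseteq> Zp p \<and> compact K \<and> pconst p 0 \<in> K \<and>
     (\<forall>x\<in>K. \<forall>y\<in>K. padd p x y \<in> K) \<and> (\<forall>x\<in>K. pneg p x \<in> K)"

definition is_haar :: "int \<Rightarrow> (nat \<Rightarrow> int) set \<Rightarrow> (nat \<Rightarrow> int) measure \<Rightarrow> bool" where
  "is_haar p K \<nu> \<longleftrightarrow> sets \<nu> = sets borel \<and> prob_space \<nu> \<and> emeasure \<nu> K = 1 \<and>
     (\<forall>x\<in>K. distr \<nu> borel (padd p x) = \<nu>)"

definition idempotent_distr :: "int \<Rightarrow> (nat \<Rightarrow> int) measure \<Rightarrow> bool" where
  "idempotent_distr p \<mu> \<longleftrightarrow> (\<exists>K x \<nu>. compact_subgroup p K \<and> x \<in> Zp p \<and> is_haar p K \<nu> \<and>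
     \<mu> = distr \<nu> borel (padd p x))"

end

theory Submission
  imports Defs
begin


instance int :: second_countable_topology
proof
  show "\<exists>B::int set set. countable B \<and> open = generate_topology B"
    by (intro exI[of _ "range lessThan \<union> range greaterThan"]) (auto simp: open_int_def)
qed

lemma Zp_range: "x \<in> Zp p \<Longrightarrow> 0 \<le> x n \<and> x n < p ^ n"
  by (auto simp: Zp_def)

lemma Zp_mod_le:
  assumes "x \<in> Zp p" "j \<le> N" shows "x N mod p ^ j = x j"
  using assms(2)
proof (induction N)
  case 0
  have "0 \<le> x 0 \<and> x 0 < p ^ 0" using assms(1) unfolding Zp_def by blast
  then show ?case using 0 by auto
next
  case (Suc N)
  show ?case
  proof (cases "j = Suc N")
    case True
    have "0 \<le> x j \<and> x j < p ^ j" using assms(1) unfolding Zp_def by blast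
    then show ?thesis using True by simp
  next
    case False
    then have "j \<le> N" using Suc by auto
    have "x (Suc N) mod p ^ j = (x (Suc N) mod p ^ N) mod p ^ j"
      using \<open>j \<le> N\<close> by (simp add: mod_mod_cancel le_imp_power_dvd)
    also have "\<dots> = x N mod p ^ j" using assms(1) by (simp add: Zp_def)
    finally show ?thesis using Suc \<open>j \<le> N\<close> by simp
  qed
qed

lemma pconst_Zp: "p > 0 \<Longrightarrow> pconst p k \<in> Zp p"
  by (simp add: Zp_def pconst_def mod_mod_cancel)

lemma padd_Zp: assumes "p > 0" "x \<in> Zp p" "y \<in> Zp p" shows "padd p x y \<in> Zp p"
proof -
  have "(x (Suc n) + y (Suc n)) mod p ^ n = (x n + y n) mod p ^ n" for n
  proof -
    have "x (Suc n) mod p ^ n = x n" "y (Suc n) mod p ^ n = y n" using assms by (auto simp: Zp_def)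
    then show ?thesis by (metis mod_add_eq)
  qed
  then show ?thesis using assms(1) by (simp add: Zp_def padd_def mod_mod_cancel)
qed

lemma pmult_Zp: assumes "p > 0" "x \<in> Zp p" "y \<in> Zp p" shows "pmult p x y \<in> Zp p"
proof -
  have "(x (Suc n) * y (Suc n)) mod p ^ n = (x n * y n) mod p ^ n" for n
  proof -
    have "x (Suc n) mod p ^ n = x n" "y (Suc n) mod p ^ n = y n" using assms by (auto simp: Zp_def)
    then show ?thesis by (metis mod_mult_eq)
  qed
  then show ?thesis using assms(1) by (simp add: Zp_def pmult_def mod_mod_cancel)
qed

lemma pneg_Zp: assumes "p > 0" "x \<in> Zp p" shows "pneg p x \<in> Zp p"
proof -
  have "(- x (Suc n)) mod p ^ n = (- x n) mod p ^ n" for n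
  proof -
    have "x (Suc n) mod p ^ n = x n" using assms by (auto simp: Zp_def)
    then show ?thesis by (metis mod_minus_eq)
  qed
  then show ?thesis using assms(1) by (simp add: Zp_def pneg_def mod_mod_cancel)
qed


lemma count_meas: "(h :: 'a::{countable,t2_space} \<Rightarrow> 'b) \<in> measurable borel (M :: 'b measure) \<longleftrightarrow> h \<in> UNIV \<rightarrow> space M"
  by (subst measurable_cong_sets[OF sets_borel_eq_count_space refl]) simp

lemma coord_meas[measurable]: "(\<lambda>z::nat\<Rightarrow>'a::second_countable_topology. z n) \<in> borel_measurable borel"
proof -
  have "(\<lambda>z::nat\<Rightarrow>'a. z n) \<in> measurable (Pi\<^sub>M UNIV (\<lambda>_. borel)) borel"
    by (rule measurable_component_singleton) simp
  moreover have "measurable (Pi\<^sub>M UNIV (\<lambda>_::nat. borel)) (borel::'a measure) = measurable (borel::(nat\<Rightarrow>'a) measure) borel"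
    by (rule measurable_cong_sets[OF sets_PiM_equal_borel refl])
  ultimately show ?thesis by simp
qed

lemma int_comp_meas:
  assumes "f \<in> borel_measurable M"
  shows "(\<lambda>\<omega>. h (f \<omega> :: 'a::{countable,t2_space,second_countable_topology}) :: 'b::topological_space) \<in> borel_measurable M"
proof -
  have "h \<in> borel_measurable borel" unfolding count_meas by simp
  from measurable_comp[OF assms this] show ?thesis by (simp only: comp_def)
qed

lemma fun_meas:
  assumes "\<And>n. (\<lambda>\<omega>. f \<omega> n) \<in> borel_measurable M"
  shows "(f :: _ \<Rightarrow> nat \<Rightarrow> int) \<in> borel_measurable M"
  using measurable_coordinatewise_then_product[of f M] assms by blast

lemma padd_meas: "padd p x \<in> borel_measurable borel"
  unfolding padd_def
  by (rule fun_meas, rule int_comp_meas, rule coord_meas)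

lemma cyl_sets: "{z::nat\<Rightarrow>int. z N = x} \<in> sets borel"
proof -
  have "{z::nat\<Rightarrow>int. z N = x} = (\<lambda>z. z N) -` {x} \<inter> space borel" by auto
  also have "\<dots> \<in> sets borel"
    by (rule measurable_sets[OF coord_meas]) (simp add: sets_borel_eq_count_space)
  finally show ?thesis .
qed

lemma conc:
  assumes "prob_space M" "emeasure M K = 1" "B \<in> sets M"
  shows "emeasure M B = emeasure M (B \<inter> K)"
proof -
  interpret prob_space M by fact
  have K: "K \<in> sets M" using assms(2) emeasure_notin_sets by force
  have "emeasure M (B - K) \<le> emeasure M (space M - K)"
    by (rule emeasure_mono) (use assms K sets.sets_into_space in auto)
  also have "\<dots> = 0" using K assms(2) by (simp add: emeasure_compl emeasure_space_1)
  finally have 0: "emeasure M (B - K) = 0" by simp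
  have "emeasure M B = emeasure M (B \<inter> K) + emeasure M (B - K)"
    using assms K by (metis Int_Diff_Un Int_Diff_disjoint plus_emeasure sets.Diff sets.Int)
  then show ?thesis using 0 by simp
qed

lemma haar_shift:
  assumes H: "is_haar p K \<nu>" and k: "k \<in> K" and range: "\<And>z. z \<in> K \<Longrightarrow> 0 \<le> z N \<and> z N < p ^ N"
    and x: "0 \<le> x" "x < p ^ N" and x': "x' = (k N + x) mod p ^ N"
  shows "emeasure \<nu> {z. z N = x'} = emeasure \<nu> {z. z N = x}"
proof -
  have s: "sets \<nu> = sets borel" and ps: "prob_space \<nu>" and K1: "emeasure \<nu> K = 1"
    and inv: "distr \<nu> borel (padd p k) = \<nu>" using H k by (auto simp: is_haar_def)
  have Ks: "K \<in> sets \<nu>" using K1 emeasure_notin_sets by force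
  then have Ksp: "K \<subseteq> space \<nu>" by (rule sets.sets_into_space)
  have pm: "padd p k \<in> measurable \<nu> borel"
    using padd_meas measurable_cong_sets[OF s refl] by blast
  have c1: "{z::nat\<Rightarrow>int. z N = x'} \<in> sets \<nu>" "{z::nat\<Rightarrow>int. z N = x} \<in> sets \<nu>"
    using cyl_sets s by auto
  have pre: "padd p k -` {z. z N = x'} \<inter> space \<nu> \<in> sets \<nu>"
    using measurable_sets[OF pm cyl_sets] .
  have eqset: "(padd p k -` {z. z N = x'} \<inter> space \<nu>) \<inter> K = {z. z N = x} \<inter> K"
  proof (intro set_eqI iffI)
    fix z assume z: "z \<in> (padd p k -` {z. z N = x'} \<inter> space \<nu>) \<inter> K"
    then have zr: "0 \<le> z N \<and> z N < p ^ N" using range by auto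
    have "(k N + z N) mod p ^ N = (k N + x) mod p ^ N" using z x' by (auto simp: padd_def)
    then have "((k N + z N) mod p ^ N - k N) mod p ^ N = ((k N + x) mod p ^ N - k N) mod p ^ N" by simp
    then have "z N mod p ^ N = x mod p ^ N" by (simp add: mod_diff_left_eq)
    then have "z N = x" using zr x by simp
    then show "z \<in> {z. z N = x} \<inter> K" using z by auto
  next
    fix z assume z: "z \<in> {z. z N = x} \<inter> K"
    then show "z \<in> (padd p k -` {z. z N = x'} \<inter> space \<nu>) \<inter> K" using x' Ksp by (auto simp: padd_def)
  qed
  have "emeasure \<nu> {z. z N = x'} = emeasure (distr \<nu> borel (padd p k)) {z. z N = x'}" using inv by simp
  also have "\<dots> = emeasure \<nu> (padd p k -` {z. z N = x'} \<inter> space \<nu>)"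
    by (rule emeasure_distr[OF pm cyl_sets])
  also have "\<dots> = emeasure \<nu> ((padd p k -` {z. z N = x'} \<inter> space \<nu>) \<inter> K)"
    by (rule conc[OF ps K1 pre])
  also have "\<dots> = emeasure \<nu> ({z. z N = x} \<inter> K)" using eqset by simp
  also have "\<dots> = emeasure \<nu> {z. z N = x}" by (rule conc[OF ps K1 c1(2), symmetric])
  finally show ?thesis .
qed



lemma range_eq: fixes a b q :: int
  assumes "0 \<le> a" "a < q" "0 \<le> b" "b < q" "q dvd (a - b)" shows "a = b"
proof -
  have "a mod q = b mod q" using assms(5) by (simp add: mod_eq_dvd_iff)
  then show ?thesis using assms by simp
qed

lemma modeq: fixes a u q :: int
  assumes "0 \<le> u" "u < q" shows "a mod q = u \<longleftrightarrow> q dvd (a - u)"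
proof -
  have "a mod q = u \<longleftrightarrow> a mod q = u mod q" using assms by simp
  also have "\<dots> \<longleftrightarrow> q dvd (a - u)" by (simp add: mod_eq_dvd_iff)
  finally show ?thesis .
qed

lemma solve:
  fixes p A u v :: int and N :: nat
  assumes p: "prime p" and N: "N \<ge> 1" and A: "p dvd A"
    and u: "0 \<le> u" "u < p ^ N" and v: "0 \<le> v" "v < p ^ N"
  shows "\<exists>x0 y0. 0 \<le> x0 \<and> x0 < p ^ N \<and> 0 \<le> y0 \<and> y0 < p ^ N \<and> (p dvd x0 \<longleftrightarrow> p dvd v) \<and>
    (\<forall>x y. 0 \<le> x \<and> x < p ^ N \<and> 0 \<le> y \<and> y < p ^ N \<longrightarrow>
      (((x + y) mod p ^ N = u \<and> (x + (A * y) mod p ^ N) mod p ^ N = v) \<longleftrightarrow> x = x0 \<and> y = y0))"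
proof -
  define q where "q = p ^ N"
  have p1: "p > 1" using p by (simp add: prime_gt_1_int)
  have q0: "q > 0" using p1 by (simp add: q_def)
  have pq: "p dvd q" using N by (simp add: q_def dvd_power)
  have ndvd: "\<not> p dvd (1 - A)"
  proof
    assume "p dvd (1 - A)"
    then have "p dvd (1 - A) + A" using A by (rule dvd_add)
    then show False using p1 by (simp add: zdvd_not_zless)
  qed
  have cop: "coprime (1 - A) q"
  proof -
    have "coprime p (1 - A)" using p ndvd by (rule prime_imp_coprime)
    then have "coprime (1 - A) p" by (simp add: ac_simps)
    then show ?thesis by (simp add: q_def)
  qed
  then have "gcd (1 - A) q = 1" by (simp add: coprime_iff_gcd_eq_1)
  then obtain b t where bt: "b * (1 - A) + t * q = 1" using bezout_int[of "1 - A" q] by auto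
  have F: "((x + y) mod q = u \<and> (x + (A * y) mod q) mod q = v) \<longleftrightarrow> q dvd (x + y - u) \<and> q dvd (x + A * y - v)" for x y
  proof -
    have "(x + (A * y) mod q) mod q = (x + A * y) mod q" by (simp add: mod_add_right_eq)
    then show ?thesis using modeq[of u q] modeq[of v q] u v by (simp add: q_def)
  qed
  define y0 where "y0 = (b * (u - v)) mod q"
  define x0 where "x0 = (u - y0) mod q"
  have r: "0 \<le> x0" "x0 < q" "0 \<le> y0" "y0 < q" using q0 by (auto simp: x0_def y0_def)
  have d1: "q dvd (x0 + y0 - u)"
  proof -
    have "(x0 + y0) mod q = ((u - y0) + y0) mod q" unfolding x0_def by (simp add: mod_add_left_eq)
    then show ?thesis by (simp add: mod_eq_dvd_iff)
  qed
  have d2: "q dvd (x0 + A * y0 - v)"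
  proof -
    have e1: "q dvd (x0 - (u - y0))" unfolding x0_def by (simp add: mod_eq_dvd_iff[symmetric])
    have e2: "q dvd (y0 - b * (u - v))" unfolding y0_def by (simp add: mod_eq_dvd_iff[symmetric])
    have e3: "q dvd (1 - A) * (y0 - b * (u - v))" using e2 by simp
    have "x0 + A * y0 - v = (x0 - (u - y0)) - (1 - A) * (y0 - b * (u - v)) + (u - v) * (1 - b * (1 - A))"
      by (simp add: algebra_simps)
    also have "(u - v) * (1 - b * (1 - A)) = (u - v) * t * q"
    proof -
      have "1 - b * (1 - A) = t * q" using bt by linarith
      then show ?thesis by simp
    qed
    finally have eq: "x0 + A * y0 - v = (x0 - (u - y0)) - (1 - A) * (y0 - b * (u - v)) + (u - v) * t * q" .
    show ?thesis unfolding eq by (rule dvd_add[OF dvd_diff[OF e1 e3]]) simp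
  qed
  have pdiv: "p dvd x0 \<longleftrightarrow> p dvd v"
  proof -
    have "p dvd (x0 + A * y0 - v)" using d2 pq by (rule dvd_trans[rotated])
    moreover have "p dvd A * y0" using A by simp
    ultimately have "p dvd (x0 - v)"
      by (metis (no_types, lifting) add_diff_cancel_left' add_diff_eq diff_add_cancel dvd_diff)
    then have "p dvd (x0 - v) + v \<longleftrightarrow> p dvd v" by (rule dvd_add_right_iff)
    then show ?thesis by simp
  qed
  have uniq: "x = x0 \<and> y = y0" if "0 \<le> x" "x < q" "0 \<le> y" "y < q" "q dvd (x + y - u)" "q dvd (x + A * y - v)" for x y
  proof -
    have "q dvd (x + y - u) - (x + A * y - v) - ((x0 + y0 - u) - (x0 + A * y0 - v))"
      using that d1 d2 by (metis dvd_diff)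
    also have "(x + y - u) - (x + A * y - v) - ((x0 + y0 - u) - (x0 + A * y0 - v)) = (1 - A) * (y - y0)"
      by (simp add: algebra_simps)
    finally have "q dvd (y - y0)" using cop by (simp add: coprime_dvd_mult_right_iff coprime_commute)
    then have yy: "y = y0" using range_eq that r by blast
    have "q dvd (x + y - u) - (x0 + y0 - u)" using that d1 by (metis dvd_diff)
    then have "q dvd (x - x0)" using yy by simp
    then have "x = x0" using range_eq that r by blast
    then show ?thesis using yy by simp
  qed
  show ?thesis
    apply (rule exI[of _ x0], rule exI[of _ y0])
    using r pdiv uniq d1 d2 F unfolding q_def by blast
qed




lemma mD_level:
  assumes H: "is_haar p (Zp p) mD" and p: "p > 0"
    and x: "0 \<le> x" "x < p ^ N" and x': "0 \<le> x'" "x' < p ^ N"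
  shows "emeasure mD {z. z N = x'} = emeasure mD {z. z N = x}"
proof (rule haar_shift[OF H pconst_Zp[OF p, of "x' - x"]])
  show "\<And>z. z \<in> Zp p \<Longrightarrow> 0 \<le> z N \<and> z N < p ^ N" by (rule Zp_range)
  show "x' = (pconst p (x' - x) N + x) mod p ^ N"
    using x' by (simp add: pconst_def mod_add_left_eq)
qed (use x in auto)

lemma pZp_level:
  assumes p: "p > 0" and z: "z \<in> pZp p"
  shows "0 \<le> z N \<and> z N < p ^ N \<and> (N \<ge> 1 \<longrightarrow> p dvd z N)"
proof -
  obtain w where w: "z = pmult p (pconst p p) w" using z by (auto simp: pZp_def)
  have zN: "z N = ((p mod p ^ N) * w N) mod p ^ N" by (simp add: w pmult_def pconst_def)
  have "p dvd z N" if "N \<ge> 1"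
  proof -
    have pq: "p dvd p ^ N" using that by (simp add: dvd_power)
    have "p dvd (p mod p ^ N)" using pq by (simp add: dvd_mod)
    then have "p dvd (p mod p ^ N) * w N" by simp
    then show ?thesis unfolding zN using pq by (simp add: dvd_mod)
  qed
  then show ?thesis using p by (simp add: zN)
qed

lemma pconst_pZp: "p > 0 \<Longrightarrow> pmult p (pconst p p) (pconst p m) \<in> pZp p"
  unfolding pZp_def using pconst_Zp by blast

lemma mpD_level0:
  assumes H: "is_haar p (pZp p) mpD" and p: "p > 0" and N: "N \<ge> 1" and x: "\<not> p dvd x"
  shows "emeasure mpD {z. z N = x} = 0"
proof -
  have s: "sets mpD = sets borel" and ps: "prob_space mpD" and K1: "emeasure mpD (pZp p) = 1"
    using H by (auto simp: is_haar_def)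
  have "emeasure mpD {z. z N = x} = emeasure mpD ({z. z N = x} \<inter> pZp p)"
    by (rule conc[OF ps K1]) (simp add: s cyl_sets)
  also have "{z. z N = x} \<inter> pZp p = {}" using pZp_level[OF p] N x by blast
  finally show ?thesis by simp
qed

lemma mpD_level:
  assumes H: "is_haar p (pZp p) mpD" and p: "p > 0"
    and x: "0 \<le> x" "x < p ^ N" "p dvd x" and x': "0 \<le> x'" "x' < p ^ N" "p dvd x'"
  shows "emeasure mpD {z. z N = x'} = emeasure mpD {z. z N = x}"
proof -
  obtain m where m: "x = p * m" using x(3) by blast
  obtain m' where m': "x' = p * m'" using x'(3) by blast
  define k where "k = pmult p (pconst p p) (pconst p (m' - m))"
  have k: "k \<in> pZp p" unfolding k_def by (rule pconst_pZp[OF p])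
  have kN: "k N = (p * (m' - m)) mod p ^ N"
    by (simp add: k_def pmult_def pconst_def mod_mult_eq)
  have "(k N + x) mod p ^ N = (p * (m' - m) + p * m) mod p ^ N"
    by (simp add: kN m mod_add_left_eq)
  also have "p * (m' - m) + p * m = x'" by (simp add: m' algebra_simps)
  finally have e: "x' = (k N + x) mod p ^ N" using x' by simp
  show ?thesis
    by (rule haar_shift[OF H k _ x(1,2) e]) (use pZp_level[OF p] in blast)
qed




lemma dvd_shift: fixes p a b :: int assumes "p dvd (a - b)" shows "p dvd a \<longleftrightarrow> p dvd b"
proof -
  have "p dvd (a - b) + b \<longleftrightarrow> p dvd b" using assms by (rule dvd_add_right_iff)
  then show ?thesis by simp
qed

lemma not_idem:
  assumes p: "prime p" "p > 2" and a: "0 < a" "a < 1"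
    and HD: "is_haar p (Zp p) mD" and HpD: "is_haar p (pZp p) mpD"
    and mu: "\<forall>A\<in>sets borel. emeasure \<mu> A = ennreal a * emeasure mD A + ennreal (1 - a) * emeasure mpD A"
  shows "\<not> idempotent_distr p \<mu>"
proof
  assume "idempotent_distr p \<mu>"
  then obtain K x0 \<nu> where K: "compact_subgroup p K" and x0: "x0 \<in> Zp p" and H: "is_haar p K \<nu>"
    and \<mu>: "\<mu> = distr \<nu> borel (padd p x0)" by (auto simp: idempotent_distr_def)
  define C where "C r = {z::nat\<Rightarrow>int. z 1 = r}" for r
  have Cs: "C r \<in> sets borel" for r unfolding C_def by (rule cyl_sets)
  have p0: "p > 0" "p > 1" using p by auto
  have sD: "sets mD = sets borel" and psD: "prob_space mD" and D1: "emeasure mD (Zp p) = 1"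
    using HD by (auto simp: is_haar_def)
  have spD: "sets mpD = sets borel" and pspD: "prob_space mpD" and pD1: "emeasure mpD (pZp p) = 1"
    using HpD by (auto simp: is_haar_def)
  define m where "m = emeasure mD (C 0)"
  have mD1: "emeasure mD (C 1) = m" unfolding m_def C_def
    by (rule mD_level[OF HD p0(1)]) (use p0 in auto)
  have mpD1: "emeasure mpD (C 1) = 0" unfolding C_def
    by (rule mpD_level0[OF HpD p0(1)]) (use p0 in \<open>auto simp: zdvd_not_zless\<close>)
  have mpD0: "emeasure mpD (C 0) = 1"
  proof -
    have "emeasure mpD (C 0) = emeasure mpD (C 0 \<inter> pZp p)"
      by (rule conc[OF pspD pD1]) (simp add: spD Cs)
    also have "C 0 \<inter> pZp p = pZp p"
    proof -
      have "z 1 = 0" if "z \<in> pZp p" for z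
      proof -
        have "0 \<le> z 1 \<and> z 1 < p \<and> p dvd z 1" using pZp_level[OF p0(1) that, of 1] by simp
        then show ?thesis by (metis order_le_less zdvd_not_zless)
      qed
      then show ?thesis unfolding C_def by auto
    qed
    finally show ?thesis using pD1 by simp
  qed
  have mpos: "m > 0"
  proof (rule ccontr)
    assume "\<not> m > 0"
    then have m0: "m = 0" by simp
    have all0: "emeasure mD (C r) = 0" if "r \<in> {0..<p}" for r
    proof -
      have "emeasure mD (C r) = m" unfolding m_def C_def
        by (rule mD_level[OF HD p0(1)]) (use that in auto)
      then show ?thesis using m0 by simp
    qed
    have "Zp p \<subseteq> (\<Union>r\<in>{0..<p}. C r)" unfolding C_def using Zp_range[of _ p 1] by auto
    then have "emeasure mD (Zp p) \<le> emeasure mD (\<Union>r\<in>{0..<p}. C r)"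
      by (intro emeasure_mono) (auto simp: sD Cs)
    also have "\<dots> \<le> (\<Sum>r\<in>{0..<p}. emeasure mD (C r))"
      by (rule emeasure_subadditive_finite) (auto simp: sD Cs)
    also have "\<dots> = 0" using all0 by simp
    finally show False using D1 by simp
  qed
  have mfin: "m \<noteq> \<infinity>" using prob_space.emeasure_le_1[OF psD, of "C 0"] unfolding m_def by (auto simp: top_unique)
  have d1: "emeasure \<mu> (C 1) = ennreal a * m" using mu Cs mD1 mpD1 by simp
  have d0: "emeasure \<mu> (C 0) = ennreal a * m + ennreal (1 - a)" using mu Cs mpD0 m_def by simp
  have d1pos: "emeasure \<mu> (C 1) > 0" using d1 mpos a by (simp add: ennreal_zero_less_mult_iff)
  have d0pos: "emeasure \<mu> (C 0) > 0"
  proof -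
    have "0 < ennreal (1 - a)" using a by simp
    also have "ennreal (1 - a) \<le> ennreal a * m + ennreal (1 - a)" by simp
    finally show ?thesis using d0 by simp
  qed
  have sK: "sets \<nu> = sets borel" and psK: "prob_space \<nu>" and K1: "emeasure \<nu> K = 1"
    and inv: "\<And>k. k \<in> K \<Longrightarrow> distr \<nu> borel (padd p k) = \<nu>" using H by (auto simp: is_haar_def)
  have spK: "space \<nu> = UNIV" using sets_eq_imp_space_eq[OF sK] by simp
  have KZ: "K \<subseteq> Zp p" and Kadd: "\<And>x y. x \<in> K \<Longrightarrow> y \<in> K \<Longrightarrow> padd p x y \<in> K"
    and Kneg: "\<And>x. x \<in> K \<Longrightarrow> pneg p x \<in> K" using K by (auto simp: compact_subgroup_def)
  have pmK: "padd p k \<in> measurable \<nu> borel" for k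
    using padd_meas measurable_cong_sets[OF sK refl] by blast
  define T where "T r = {z::nat\<Rightarrow>int. (x0 1 + z 1) mod p = r}" for r
  have TC: "padd p x0 -` C r \<inter> space \<nu> = T r" for r
    unfolding T_def C_def padd_def spK by simp
  have Ts: "T r \<in> sets \<nu>" for r
    using measurable_sets[OF pmK[of x0] Cs[of r]] unfolding TC .
  have muT: "emeasure \<mu> (C r) = emeasure \<nu> (T r)" for r
    using emeasure_distr[OF pmK[of x0] Cs[of r]] unfolding \<mu>[symmetric] TC .
  have exK: "\<exists>z\<in>K. z \<in> T r" if "emeasure \<nu> (T r) > 0" for r
  proof (rule ccontr)
    assume "\<not> ?thesis"
    then have "T r \<inter> K = {}" by auto
    then have "emeasure \<nu> (T r) = 0" using conc[OF psK K1 Ts[of r]] by simp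
    then show False using that by simp
  qed
  obtain z0 where z0: "z0 \<in> K" "z0 \<in> T 0" using exK[of 0] d0pos muT by auto
  obtain z1 where z1: "z1 \<in> K" "z1 \<in> T 1" using exK[of 1] d1pos muT by auto
  define k where "k = padd p z1 (pneg p z0)"
  have k: "k \<in> K" unfolding k_def by (intro Kadd Kneg z0 z1)
  have dz0: "p dvd (x0 1 + z0 1)" using z0 by (auto simp: T_def mod_eq_0_iff_dvd)
  have dz1: "p dvd (x0 1 + z1 1 - 1)" using z1 p0 modeq[of 1 p "x0 1 + z1 1"] by (auto simp: T_def)
  have dk: "p dvd (k 1 - (z1 1 - z0 1))"
  proof -
    have "k 1 mod p = (z1 1 - z0 1) mod p" by (simp add: k_def padd_def pneg_def mod_add_right_eq)
    then show ?thesis by (simp add: mod_eq_dvd_iff)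
  qed
  have dk1: "p dvd (k 1 - 1)"
  proof -
    have "k 1 - 1 = (k 1 - (z1 1 - z0 1)) + (x0 1 + z1 1 - 1) - (x0 1 + z0 1)" by simp
    moreover have "p dvd (k 1 - (z1 1 - z0 1)) + (x0 1 + z1 1 - 1) - (x0 1 + z0 1)"
      by (rule dvd_diff[OF dvd_add[OF dk dz1] dz0])
    ultimately show ?thesis by simp
  qed
  have eqset: "(padd p k -` T 1 \<inter> space \<nu>) \<inter> K = T 0 \<inter> K"
  proof -
    have "(x0 1 + padd p k z 1) mod p = 1 \<longleftrightarrow> (x0 1 + z 1) mod p = 0" for z
    proof -
      have "(x0 1 + padd p k z 1) mod p = (x0 1 + k 1 + z 1) mod p"
        by (simp add: padd_def mod_add_right_eq add.assoc)
      then have "(x0 1 + padd p k z 1) mod p = 1 \<longleftrightarrow> p dvd (x0 1 + k 1 + z 1 - 1)"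
        using modeq[of 1 p] p0 by simp
      also have "\<dots> \<longleftrightarrow> p dvd (x0 1 + z 1)"
        by (rule dvd_shift) (use dk1 in \<open>simp add: algebra_simps\<close>)
      also have "\<dots> \<longleftrightarrow> (x0 1 + z 1) mod p = 0" by (simp add: mod_eq_0_iff_dvd)
      finally show ?thesis .
    qed
    note zz = this
    show ?thesis
    proof (intro set_eqI)
      fix z
      show "z \<in> (padd p k -` T 1 \<inter> space \<nu>) \<inter> K \<longleftrightarrow> z \<in> T 0 \<inter> K"
        using zz[of z] unfolding T_def spK by simp
    qed
  qed
  have T1: "T 1 \<in> sets borel" using Ts[of 1] unfolding sK .
  have pre: "padd p k -` T 1 \<inter> space \<nu> \<in> sets \<nu>"
    by (rule measurable_sets[OF pmK T1])
  have "emeasure \<nu> (T 1) = emeasure (distr \<nu> borel (padd p k)) (T 1)" using inv[OF k] by simp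
  also have "\<dots> = emeasure \<nu> (padd p k -` T 1 \<inter> space \<nu>)"
    by (rule emeasure_distr[OF pmK T1])
  also have "\<dots> = emeasure \<nu> ((padd p k -` T 1 \<inter> space \<nu>) \<inter> K)" by (rule conc[OF psK K1 pre])
  also have "\<dots> = emeasure \<nu> (T 0 \<inter> K)" using eqset by simp
  also have "\<dots> = emeasure \<nu> (T 0)" by (rule conc[OF psK K1 Ts, symmetric])
  finally have "emeasure \<nu> (T 1) = emeasure \<nu> (T 0)" .
  then have "emeasure \<mu> (C 1) = emeasure \<mu> (C 0)" by (simp only: muT)
  then have "ennreal a * m = ennreal a * m + ennreal (1 - a)" by (simp only: d0 d1)
  then have "ennreal a * m + 0 = ennreal a * m + ennreal (1 - a)" by (simp only: add_0_right)
  then have "ennreal a * m = \<infinity> \<or> 0 = ennreal (1 - a)" unfolding ennreal_add_left_cancel .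
  moreover have "ennreal a * m \<noteq> \<infinity>" using mfin by (simp add: ennreal_mult_eq_top_iff)
  ultimately have "ennreal (1 - a) = 0" by simp
  then show False using a by simp
qed




lemma int2_meas:
  assumes "f \<in> borel_measurable M" "g \<in> borel_measurable M"
  shows "(\<lambda>\<omega>. h (f \<omega> :: int) (g \<omega> :: int) :: int) \<in> borel_measurable M"
proof -
  have hm: "(\<lambda>z::int\<times>int. h (fst z) (snd z) :: int) \<in> borel_measurable borel"
    unfolding count_meas by simp
  have pm: "(\<lambda>\<omega>. (f \<omega>, g \<omega>)) \<in> borel_measurable M"
    by (rule borel_measurable_Pair[OF assms(1) assms(2)])
  from measurable_comp[OF pm hm] show ?thesis by (simp only: comp_def fst_conv snd_conv)
qed

lemma neg_mod_iff:
  fixes q w v :: int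
  assumes "0 \<le> w" "w < q" "0 \<le> v" "v < q"
  shows "(- w) mod q = v \<longleftrightarrow> w = (- v) mod q"
proof
  assume h: "(- w) mod q = v"
  have "w = w mod q" using assms by simp
  also have "\<dots> = (- (- w)) mod q" by simp
  also have "\<dots> = (- ((- w) mod q)) mod q" by (simp add: mod_minus_eq)
  finally show "w = (- v) mod q" using h by simp
next
  assume h: "w = (- v) mod q"
  have "(- w) mod q = (- ((- v) mod q)) mod q" using h by simp
  also have "\<dots> = (- (- v)) mod q" by (simp add: mod_minus_eq)
  finally show "(- w) mod q = v" using assms by simp
qed

lemma indep_rect:
  assumes P: "prob_space P" and m1: "\<xi>1 \<in> measurable P borel" and m2: "\<xi>2 \<in> measurable P borel"
    and ind: "prob_space.indep_var P borel \<xi>1 borel \<xi>2"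
    and B1: "B1 \<in> sets borel" and B2: "B2 \<in> sets borel"
  shows "emeasure P {\<omega>\<in>space P. \<xi>1 \<omega> \<in> B1 \<and> \<xi>2 \<omega> \<in> B2}
    = emeasure (distr P borel \<xi>1) B1 * emeasure (distr P borel \<xi>2) B2"
proof -
  interpret P: prob_space P by fact
  have eq: "distr P borel \<xi>1 \<Otimes>\<^sub>M distr P borel \<xi>2 = distr P (borel \<Otimes>\<^sub>M borel) (\<lambda>x. (\<xi>1 x, \<xi>2 x))"
    using ind unfolding P.indep_var_distribution_eq by blast
  have sf: "sigma_finite_measure (distr P borel \<xi>2)"
    by (rule prob_space_imp_sigma_finite[OF P.prob_space_distr[OF m2]])
  have pm: "(\<lambda>x. (\<xi>1 x, \<xi>2 x)) \<in> measurable P (borel \<Otimes>\<^sub>M borel)" by (rule measurable_Pair[OF m1 m2])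
  have Bs: "B1 \<times> B2 \<in> sets (borel \<Otimes>\<^sub>M borel)" by (rule pair_measureI[OF B1 B2])
  have "emeasure (distr P borel \<xi>1) B1 * emeasure (distr P borel \<xi>2) B2
      = emeasure (distr P borel \<xi>1 \<Otimes>\<^sub>M distr P borel \<xi>2) (B1 \<times> B2)"
    by (rule sigma_finite_measure.emeasure_pair_measure_Times[OF sf, symmetric]) (simp_all add: B1 B2)
  also have "\<dots> = emeasure P ((\<lambda>x. (\<xi>1 x, \<xi>2 x)) -` (B1 \<times> B2) \<inter> space P)"
    unfolding eq by (rule emeasure_distr[OF pm Bs])
  also have "(\<lambda>x. (\<xi>1 x, \<xi>2 x)) -` (B1 \<times> B2) \<inter> space P = {\<omega>\<in>space P. \<xi>1 \<omega> \<in> B1 \<and> \<xi>2 \<omega> \<in> B2}"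
    by blast
  finally show ?thesis by simp
qed




lemma mu_level:
  assumes p: "p > 0" and N: "N \<ge> 1"
    and HD: "is_haar p (Zp p) mD" and HpD: "is_haar p (pZp p) mpD"
    and mu: "\<forall>A\<in>sets borel. emeasure \<mu> A = ennreal a * emeasure mD A + ennreal (1 - a) * emeasure mpD A"
    and x: "0 \<le> x" "x < p ^ N" and x': "0 \<le> x'" "x' < p ^ N" and d: "p dvd x \<longleftrightarrow> p dvd x'"
  shows "emeasure \<mu> {z. z N = x} = emeasure \<mu> {z. z N = x'}"
proof -
  have e1: "emeasure mD {z. z N = x} = emeasure mD {z. z N = x'}"
    by (rule mD_level[OF HD p x' x])
  have e2: "emeasure mpD {z. z N = x} = emeasure mpD {z. z N = x'}"
  proof (cases "p dvd x")
    case True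
    then show ?thesis using mpD_level[OF HpD p x' _ x] d by simp
  next
    case False
    then show ?thesis using mpD_level0[OF HpD p N] d by simp
  qed
  show ?thesis using mu cyl_sets[of N x] cyl_sets[of N x'] e1 e2 by simp
qed


lemma sym_part:
  fixes p :: int and c :: "nat \<Rightarrow> int" and a :: real
    and P :: "'w measure" and \<xi>1 \<xi>2 :: "'w \<Rightarrow> (nat \<Rightarrow> int)"
    and mD mpD :: "(nat \<Rightarrow> int) measure"
  assumes p: "prime p" and c: "c \<in> Zp_units p"
    and P: "prob_space P" and m1: "\<xi>1 \<in> measurable P borel" and m2: "\<xi>2 \<in> measurable P borel"
    and r1: "\<forall>\<omega>\<in>space P. \<xi>1 \<omega> \<in> Zp p" and r2: "\<forall>\<omega>\<in>space P. \<xi>2 \<omega> \<in> Zp p"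
    and ind: "prob_space.indep_var P borel \<xi>1 borel \<xi>2"
    and HD: "is_haar p (Zp p) mD" and HpD: "is_haar p (pZp p) mpD"
    and mu: "\<forall>A\<in>sets borel. emeasure (distr P borel \<xi>1) A
           = ennreal a * emeasure mD A + ennreal (1 - a) * emeasure mpD A"
    and d2: "distr P borel \<xi>2 = mD"
    and \<alpha>: "\<alpha> = pmult p (pconst p p) c"
    and L1: "L1 = (\<lambda>\<omega>. padd p (\<xi>1 \<omega>) (\<xi>2 \<omega>))"
    and L2: "L2 = (\<lambda>\<omega>. padd p (\<xi>1 \<omega>) (pmult p \<alpha> (\<xi>2 \<omega>)))"
  shows "distr P borel (\<lambda>\<omega>. (L1 \<omega>, L2 \<omega>)) = distr P borel (\<lambda>\<omega>. (L1 \<omega>, pneg p (L2 \<omega>)))"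
proof -
  interpret P: prob_space P by fact
  have p0: "p > 0" using p by (simp add: prime_gt_0_int)
  have cZ: "c \<in> Zp p" using c by (simp add: Zp_units_def)
  have \<alpha>p: "\<alpha> \<in> pZp p" unfolding \<alpha> pZp_def using cZ by blast
  have \<alpha>dvd: "p dvd \<alpha> N" if "N \<ge> 1" for N using pZp_level[OF p0 \<alpha>p, of N] that by simp
  have L1Z: "L1 \<omega> \<in> Zp p" if "\<omega> \<in> space P" for \<omega>
    unfolding L1 using padd_Zp[OF p0] r1 r2 that by blast
  have L2Z: "L2 \<omega> \<in> Zp p" if "\<omega> \<in> space P" for \<omega>
  proof -
    have "pmult p \<alpha> (\<xi>2 \<omega>) \<in> Zp p" using pmult_Zp[OF p0] \<alpha>p r2 that pZp_def pconst_Zp[OF p0] cZ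
      by (metis \<alpha>)
    then show ?thesis unfolding L2 using padd_Zp[OF p0] r1 that by blast
  qed
  have NL2Z: "pneg p (L2 \<omega>) \<in> Zp p" if "\<omega> \<in> space P" for \<omega>
    using pneg_Zp[OF p0 L2Z[OF that]] .
  have L1N: "L1 \<omega> N = (\<xi>1 \<omega> N + \<xi>2 \<omega> N) mod p ^ N" for \<omega> N
    unfolding L1 padd_def by (rule refl)
  have L2N: "L2 \<omega> N = (\<xi>1 \<omega> N + (\<alpha> N * \<xi>2 \<omega> N) mod p ^ N) mod p ^ N" for \<omega> N
    unfolding L2 padd_def pmult_def by (rule refl)
  have NL2N: "pneg p (L2 \<omega>) N = (- L2 \<omega> N) mod p ^ N" for \<omega> N
    unfolding pneg_def by (rule refl)
  have x1m: "(\<lambda>\<omega>. \<xi>1 \<omega> n) \<in> borel_measurable P" for n by (rule measurable_compose[OF m1 coord_meas])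
  have x2m: "(\<lambda>\<omega>. \<xi>2 \<omega> n) \<in> borel_measurable P" for n by (rule measurable_compose[OF m2 coord_meas])
  have L1m: "(\<lambda>\<omega>. L1 \<omega> n) \<in> borel_measurable P" for n
    unfolding L1N by (rule int2_meas[OF x1m x2m])
  have L2m: "(\<lambda>\<omega>. L2 \<omega> n) \<in> borel_measurable P" for n
    unfolding L2N by (rule int2_meas[OF x1m x2m])
  have NL2m: "(\<lambda>\<omega>. pneg p (L2 \<omega>) n) \<in> borel_measurable P" for n
    unfolding NL2N by (rule int_comp_meas[OF L2m])
  define Z where "Z = (\<lambda>\<omega> n. (L1 \<omega> n, L2 \<omega> n))"
  define W where "W = (\<lambda>\<omega> n. (L1 \<omega> n, pneg p (L2 \<omega>) n))"
  have Zm: "Z \<in> borel_measurable P"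
    unfolding Z_def by (rule measurable_coordinatewise_then_product) (rule borel_measurable_Pair[OF L1m L2m])
  have Wm: "W \<in> borel_measurable P"
    unfolding W_def by (rule measurable_coordinatewise_then_product) (rule borel_measurable_Pair[OF L1m NL2m])
  define G' where "G' = (\<lambda>w::nat \<Rightarrow> int \<times> int. (\<lambda>n. fst (w n), \<lambda>n. snd (w n)))"
  have G'm: "G' \<in> measurable borel borel"
  proof -
    have f: "(\<lambda>w::nat \<Rightarrow> int \<times> int. fst (w n)) \<in> borel_measurable borel" for n
      by (rule int_comp_meas[OF coord_meas])
    have s: "(\<lambda>w::nat \<Rightarrow> int \<times> int. snd (w n)) \<in> borel_measurable borel" for n
      by (rule int_comp_meas[OF coord_meas])
    show ?thesis unfolding G'_def
      by (rule borel_measurable_Pair[OF fun_meas[OF f] fun_meas[OF s]])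
  qed
  have GZ: "(\<lambda>\<omega>. (L1 \<omega>, L2 \<omega>)) = G' \<circ> Z" unfolding G'_def Z_def comp_def by simp
  have GW: "(\<lambda>\<omega>. (L1 \<omega>, pneg p (L2 \<omega>))) = G' \<circ> W" unfolding G'_def W_def comp_def by simp
  have KEY: "emeasure P {\<omega>\<in>space P. (L1 \<omega> N, L2 \<omega> N) \<in> G}
           = emeasure P {\<omega>\<in>space P. (L1 \<omega> N, pneg p (L2 \<omega>) N) \<in> G}" if N: "N \<ge> 1" for N G
  proof -
    define q where "q = p ^ N"
    have q0: "q > 0" using p0 by (simp add: q_def)
    have pq: "p dvd q" using N by (simp add: q_def dvd_power)
    have rL1: "0 \<le> L1 \<omega> N \<and> L1 \<omega> N < q" for \<omega> unfolding L1N q_def using q0 q_def by simp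
    have rL2: "0 \<le> L2 \<omega> N \<and> L2 \<omega> N < q" for \<omega> unfolding L2N q_def using q0 q_def by simp
    have rNL2: "0 \<le> pneg p (L2 \<omega>) N \<and> pneg p (L2 \<omega>) N < q" for \<omega> unfolding NL2N q_def using q0 q_def by simp
    have EVAL: "\<exists>x0 y0. 0 \<le> x0 \<and> x0 < q \<and> 0 \<le> y0 \<and> y0 < q \<and> (p dvd x0 \<longleftrightarrow> p dvd w) \<and>
        emeasure P {\<omega>\<in>space P. L1 \<omega> N = u \<and> L2 \<omega> N = w}
          = emeasure (distr P borel \<xi>1) {z. z N = x0} * emeasure mD {z. z N = y0}"
      if u: "0 \<le> u" "u < q" and w: "0 \<le> w" "w < q" for u w
    proof -
      obtain x0 y0 where xy: "0 \<le> x0" "x0 < q" "0 \<le> y0" "y0 < q" "p dvd x0 \<longleftrightarrow> p dvd w"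
        and sol: "\<And>x y. 0 \<le> x \<and> x < q \<and> 0 \<le> y \<and> y < q \<Longrightarrow>
          (((x + y) mod q = u \<and> (x + (\<alpha> N * y) mod q) mod q = w) \<longleftrightarrow> x = x0 \<and> y = y0)"
        using solve[OF p N \<alpha>dvd[OF N], of u w] u w unfolding q_def by blast
      have ev: "{\<omega>\<in>space P. L1 \<omega> N = u \<and> L2 \<omega> N = w} = {\<omega>\<in>space P. \<xi>1 \<omega> \<in> {z. z N = x0} \<and> \<xi>2 \<omega> \<in> {z. z N = y0}}"
      proof (intro set_eqI)
        fix \<omega>
        show "\<omega> \<in> {\<omega>\<in>space P. L1 \<omega> N = u \<and> L2 \<omega> N = w} \<longleftrightarrow> \<omega> \<in> {\<omega>\<in>space P. \<xi>1 \<omega> \<in> {z. z N = x0} \<and> \<xi>2 \<omega> \<in> {z. z N = y0}}"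
        proof (cases "\<omega> \<in> space P")
          case True
          have "0 \<le> \<xi>1 \<omega> N \<and> \<xi>1 \<omega> N < q \<and> 0 \<le> \<xi>2 \<omega> N \<and> \<xi>2 \<omega> N < q"
          proof -
            have "\<xi>1 \<omega> \<in> Zp p" "\<xi>2 \<omega> \<in> Zp p" using r1 r2 True by auto
            then show ?thesis using Zp_range[of "\<xi>1 \<omega>" p N] Zp_range[of "\<xi>2 \<omega>" p N] unfolding q_def by auto
          qed
          from sol[OF this] show ?thesis using True unfolding L1N L2N q_def by simp
        next
          case False
          then show ?thesis by simp
        qed
      qed
      have "emeasure P {\<omega>\<in>space P. L1 \<omega> N = u \<and> L2 \<omega> N = w}
          = emeasure (distr P borel \<xi>1) {z. z N = x0} * emeasure (distr P borel \<xi>2) {z. z N = y0}"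
        unfolding ev by (rule indep_rect[OF P m1 m2 ind cyl_sets cyl_sets])
      then show ?thesis using xy d2 by blast
    qed
    have POINT: "emeasure P {\<omega>\<in>space P. L1 \<omega> N = u \<and> L2 \<omega> N = v}
        = emeasure P {\<omega>\<in>space P. L1 \<omega> N = u \<and> pneg p (L2 \<omega>) N = v}" for u v
    proof (cases "0 \<le> u \<and> u < q \<and> 0 \<le> v \<and> v < q")
      case False
      have e1: "{\<omega>\<in>space P. L1 \<omega> N = u \<and> L2 \<omega> N = v} = {}" using False rL1 rL2 by force
      have e2: "{\<omega>\<in>space P. L1 \<omega> N = u \<and> pneg p (L2 \<omega>) N = v} = {}" using False rL1 rNL2 by force
      show ?thesis unfolding e1 e2 ..
    next
      case True
      define v' where "v' = (- v) mod q"
      have v': "0 \<le> v'" "v' < q" using q0 by (auto simp: v'_def)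
      have eqW: "{\<omega>\<in>space P. L1 \<omega> N = u \<and> pneg p (L2 \<omega>) N = v} = {\<omega>\<in>space P. L1 \<omega> N = u \<and> L2 \<omega> N = v'}"
      proof (intro set_eqI)
        fix \<omega>
        have "pneg p (L2 \<omega>) N = v \<longleftrightarrow> L2 \<omega> N = v'"
          unfolding NL2N v'_def using neg_mod_iff[of "L2 \<omega> N" q v] rL2[of \<omega>] True unfolding q_def by simp
        then show "\<omega> \<in> {\<omega>\<in>space P. L1 \<omega> N = u \<and> pneg p (L2 \<omega>) N = v} \<longleftrightarrow> \<omega> \<in> {\<omega>\<in>space P. L1 \<omega> N = u \<and> L2 \<omega> N = v'}"
          by simp
      qed
      obtain x0 y0 where A0: "0 \<le> x0" "x0 < q" "0 \<le> y0" "y0 < q" "p dvd x0 \<longleftrightarrow> p dvd v"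
        and E0: "emeasure P {\<omega>\<in>space P. L1 \<omega> N = u \<and> L2 \<omega> N = v}
          = emeasure (distr P borel \<xi>1) {z. z N = x0} * emeasure mD {z. z N = y0}"
        using EVAL[of u v] True by blast
      obtain x1 y1 where A1: "0 \<le> x1" "x1 < q" "0 \<le> y1" "y1 < q" "p dvd x1 \<longleftrightarrow> p dvd v'"
        and E1: "emeasure P {\<omega>\<in>space P. L1 \<omega> N = u \<and> L2 \<omega> N = v'}
          = emeasure (distr P borel \<xi>1) {z. z N = x1} * emeasure mD {z. z N = y1}"
        using EVAL[of u v'] True v' by blast
      have dv: "p dvd v' \<longleftrightarrow> p dvd v"
      proof -
        have "p dvd v' \<longleftrightarrow> p dvd (- v)" unfolding v'_def by (rule dvd_mod_iff[OF pq])
        then show ?thesis by simp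
      qed
      have m1eq: "emeasure (distr P borel \<xi>1) {z. z N = x0} = emeasure (distr P borel \<xi>1) {z. z N = x1}"
        by (rule mu_level[OF p0 N HD HpD mu]) (use A0 A1 dv in \<open>simp_all add: q_def\<close>)
      have m2eq: "emeasure mD {z. z N = y0} = emeasure mD {z. z N = y1}"
        by (rule mD_level[OF HD p0]) (use A0 A1 in \<open>simp_all add: q_def\<close>)
      show ?thesis unfolding eqW E0 E1 m1eq m2eq ..
    qed
    define R where "R = (\<lambda>\<omega>. (L1 \<omega> N, L2 \<omega> N))"
    define R' where "R' = (\<lambda>\<omega>. (L1 \<omega> N, pneg p (L2 \<omega>) N))"
    have Rm: "R \<in> borel_measurable P" unfolding R_def by (rule borel_measurable_Pair[OF L1m L2m])
    have R'm: "R' \<in> borel_measurable P" unfolding R'_def by (rule borel_measurable_Pair[OF L1m NL2m])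
    have sAll: "H \<in> sets (borel :: (int \<times> int) measure)" for H by (simp add: sets_borel_eq_count_space)
    have DR: "distr P borel R = distr P borel R'"
    proof (rule measure_eqI_countable[where A=UNIV])
      show "sets (distr P borel R) = Pow UNIV" by (simp add: sets_borel_eq_count_space)
      show "sets (distr P borel R') = Pow UNIV" by (simp add: sets_borel_eq_count_space)
      show "countable (UNIV :: (int \<times> int) set)" by simp
    next
      fix uv :: "int \<times> int"
      obtain u v where uv: "uv = (u, v)" by (cases uv)
      have e1: "R -` {uv} \<inter> space P = {\<omega>\<in>space P. L1 \<omega> N = u \<and> L2 \<omega> N = v}" unfolding R_def uv by blast
      have e2: "R' -` {uv} \<inter> space P = {\<omega>\<in>space P. L1 \<omega> N = u \<and> pneg p (L2 \<omega>) N = v}" unfolding R'_def uv by blast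
      show "emeasure (distr P borel R) {uv} = emeasure (distr P borel R') {uv}"
        unfolding emeasure_distr[OF Rm sAll] emeasure_distr[OF R'm sAll] e1 e2 by (rule POINT)
    qed
    have f1: "{\<omega>\<in>space P. (L1 \<omega> N, L2 \<omega> N) \<in> G} = R -` G \<inter> space P" unfolding R_def by blast
    have f2: "{\<omega>\<in>space P. (L1 \<omega> N, pneg p (L2 \<omega>) N) \<in> G} = R' -` G \<inter> space P" unfolding R'_def by blast
    show ?thesis
      unfolding f1 f2 emeasure_distr[OF Rm sAll, symmetric] emeasure_distr[OF R'm sAll, symmetric] DR ..
  qed
  have ZW: "distr P borel Z = distr P borel W"
  proof (rule measure_eqI_PiM_infinite[where I=UNIV and M="\<lambda>_. borel"])
    show "sets (distr P borel Z) = sets (Pi\<^sub>M UNIV (\<lambda>_. borel))"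
      by (simp add: sets_PiM_equal_borel)
    show "sets (distr P borel W) = sets (Pi\<^sub>M UNIV (\<lambda>_. borel))"
      by (simp add: sets_PiM_equal_borel)
    show "finite_measure (distr P borel Z)"
      using P.prob_space_distr[OF Zm] by (rule prob_space.axioms(1))
  next
    fix A J assume J: "finite J" "J \<subseteq> (UNIV::nat set)" and A: "\<And>i. i \<in> J \<Longrightarrow> A i \<in> sets (borel :: (int \<times> int) measure)"
    define X where "X = prod_emb UNIV (\<lambda>_. borel :: (int \<times> int) measure) J (Pi\<^sub>E J A)"
    have Xs: "X \<in> sets borel"
    proof -
      have "X \<in> sets (Pi\<^sub>M UNIV (\<lambda>_. borel :: (int \<times> int) measure))"
        unfolding X_def by (rule sets_PiM_I) (use J A in auto)
      then show ?thesis by (simp add: sets_PiM_equal_borel)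
    qed
    have Xeq: "X = {f. \<forall>j\<in>J. f j \<in> A j}"
      unfolding X_def prod_emb_def by (auto simp: PiE_iff space_PiM)
    define N where "N = Suc (Max (insert 0 J))"
    have N1: "N \<ge> 1" unfolding N_def by simp
    have jN: "j \<le> N" if "j \<in> J" for j
    proof -
      have "j \<le> Max (insert 0 J)" by (rule Max_ge) (use J(1) that in auto)
      then show ?thesis unfolding N_def by simp
    qed
    define G where "G = {(u, v). \<forall>j\<in>J. (u mod p ^ j, v mod p ^ j) \<in> A j}"
    have eZ: "Z -` X \<inter> space P = {\<omega>\<in>space P. (L1 \<omega> N, L2 \<omega> N) \<in> G}"
    proof (intro set_eqI iffI)
      fix \<omega> assume "\<omega> \<in> Z -` X \<inter> space P"
      then have \<omega>: "\<omega> \<in> space P" "\<forall>j\<in>J. (L1 \<omega> j, L2 \<omega> j) \<in> A j" unfolding Xeq Z_def by auto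
      have "(L1 \<omega> N mod p ^ j, L2 \<omega> N mod p ^ j) \<in> A j" if "j \<in> J" for j
      proof -
        have "(L1 \<omega> j, L2 \<omega> j) \<in> A j \<or> (L1 \<omega> N mod p ^ j, L2 \<omega> N mod p ^ j) \<in> A j" using \<omega>(2) that by blast
        then show ?thesis using Zp_mod_le[OF L1Z[OF \<omega>(1)] jN[OF that]] Zp_mod_le[OF L2Z[OF \<omega>(1)] jN[OF that]] by simp
      qed
      then show "\<omega> \<in> {\<omega>\<in>space P. (L1 \<omega> N, L2 \<omega> N) \<in> G}" unfolding G_def using \<omega>(1) by simp
    next
      fix \<omega> assume "\<omega> \<in> {\<omega>\<in>space P. (L1 \<omega> N, L2 \<omega> N) \<in> G}"
      then have \<omega>: "\<omega> \<in> space P" "\<forall>j\<in>J. (L1 \<omega> N mod p ^ j, L2 \<omega> N mod p ^ j) \<in> A j"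
        unfolding G_def by auto
      have "(L1 \<omega> j, L2 \<omega> j) \<in> A j" if "j \<in> J" for j
      proof -
        have "(L1 \<omega> j, L2 \<omega> j) \<in> A j \<or> (L1 \<omega> N mod p ^ j, L2 \<omega> N mod p ^ j) \<in> A j" using \<omega>(2) that by blast
        then show ?thesis using Zp_mod_le[OF L1Z[OF \<omega>(1)] jN[OF that]] Zp_mod_le[OF L2Z[OF \<omega>(1)] jN[OF that]] by simp
      qed
      then show "\<omega> \<in> Z -` X \<inter> space P" unfolding Xeq Z_def using \<omega>(1) by simp
    qed
    have eW: "W -` X \<inter> space P = {\<omega>\<in>space P. (L1 \<omega> N, pneg p (L2 \<omega>) N) \<in> G}"
    proof (intro set_eqI iffI)
      fix \<omega> assume "\<omega> \<in> W -` X \<inter> space P"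
      then have \<omega>: "\<omega> \<in> space P" "\<forall>j\<in>J. (L1 \<omega> j, pneg p (L2 \<omega>) j) \<in> A j" unfolding Xeq W_def by auto
      have "(L1 \<omega> N mod p ^ j, pneg p (L2 \<omega>) N mod p ^ j) \<in> A j" if "j \<in> J" for j
      proof -
        have "(L1 \<omega> j, pneg p (L2 \<omega>) j) \<in> A j \<or> (L1 \<omega> N mod p ^ j, pneg p (L2 \<omega>) N mod p ^ j) \<in> A j" using \<omega>(2) that by blast
        then show ?thesis using Zp_mod_le[OF L1Z[OF \<omega>(1)] jN[OF that]] Zp_mod_le[OF NL2Z[OF \<omega>(1)] jN[OF that]] by simp
      qed
      then show "\<omega> \<in> {\<omega>\<in>space P. (L1 \<omega> N, pneg p (L2 \<omega>) N) \<in> G}" unfolding G_def using \<omega>(1) by simp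
    next
      fix \<omega> assume "\<omega> \<in> {\<omega>\<in>space P. (L1 \<omega> N, pneg p (L2 \<omega>) N) \<in> G}"
      then have \<omega>: "\<omega> \<in> space P" "\<forall>j\<in>J. (L1 \<omega> N mod p ^ j, pneg p (L2 \<omega>) N mod p ^ j) \<in> A j"
        unfolding G_def by auto
      have "(L1 \<omega> j, pneg p (L2 \<omega>) j) \<in> A j" if "j \<in> J" for j
      proof -
        have "(L1 \<omega> j, pneg p (L2 \<omega>) j) \<in> A j \<or> (L1 \<omega> N mod p ^ j, pneg p (L2 \<omega>) N mod p ^ j) \<in> A j" using \<omega>(2) that by blast
        then show ?thesis using Zp_mod_le[OF L1Z[OF \<omega>(1)] jN[OF that]] Zp_mod_le[OF NL2Z[OF \<omega>(1)] jN[OF that]] by simp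
      qed
      then show "\<omega> \<in> W -` X \<inter> space P" unfolding Xeq W_def using \<omega>(1) by simp
    qed
    have "emeasure (distr P borel Z) X = emeasure P (Z -` X \<inter> space P)"
      by (rule emeasure_distr[OF Zm Xs])
    also have "\<dots> = emeasure P (W -` X \<inter> space P)"
      unfolding eZ eW by (rule KEY[OF N1])
    also have "\<dots> = emeasure (distr P borel W) X"
      by (rule emeasure_distr[OF Wm Xs, symmetric])
    finally show "emeasure (distr P borel Z) (prod_emb UNIV (\<lambda>_. borel) J (Pi\<^sub>E J A))
        = emeasure (distr P borel W) (prod_emb UNIV (\<lambda>_. borel) J (Pi\<^sub>E J A))"
      unfolding X_def .
  qed
  have "distr P borel (\<lambda>\<omega>. (L1 \<omega>, L2 \<omega>)) = distr (distr P borel Z) borel G'"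
    unfolding GZ by (rule distr_distr[OF G'm Zm, symmetric])
  also have "\<dots> = distr (distr P borel W) borel G'" unfolding ZW ..
  also have "\<dots> = distr P borel (\<lambda>\<omega>. (L1 \<omega>, pneg p (L2 \<omega>)))"
    unfolding GW by (rule distr_distr[OF G'm Wm])
  finally show ?thesis .
qed


theorem mainTheorem5:
  fixes p :: int and c :: "nat \<Rightarrow> int" and a :: real
    and P :: "'w measure" and \<xi>1 \<xi>2 :: "'w \<Rightarrow> (nat \<Rightarrow> int)"
    and mD mpD :: "(nat \<Rightarrow> int) measure"
  assumes "prime p" and "p > 2"
    and "c \<in> Zp_units p"
    and "0 < a" and "a < 1"
    and "prob_space P"
    and "\<xi>1 \<in> measurable P borel" and "\<xi>2 \<in> measurable P borel"
    and "\<forall>\<omega>\<in>space P. \<xi>1 \<omega> \<in> Zp p" and "\<forall>\<omega>\<in>space P. \<xi>2 \<omega> \<in> Zp p"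
    and "prob_space.indep_var P borel \<xi>1 borel \<xi>2"
    and "is_haar p (Zp p) mD" and "is_haar p (pZp p) mpD"
    and "\<forall>A\<in>sets borel. emeasure (distr P borel \<xi>1) A
           = ennreal a * emeasure mD A + ennreal (1 - a) * emeasure mpD A"
    and "distr P borel \<xi>2 = mD"
  shows "(let \<alpha> = pmult p (pconst p p) c;
              L1 = (\<lambda>\<omega>. padd p (\<xi>1 \<omega>) (\<xi>2 \<omega>));
              L2 = (\<lambda>\<omega>. padd p (\<xi>1 \<omega>) (pmult p \<alpha> (\<xi>2 \<omega>)))
          in distr P borel (\<lambda>\<omega>. (L1 \<omega>, L2 \<omega>))
             = distr P borel (\<lambda>\<omega>. (L1 \<omega>, pneg p (L2 \<omega>))))
         \<and> \<not> idempotent_distr p (distr P borel \<xi>1)"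
  proof -
  have p0: "p > 0" using assms(2) by simp
  show ?thesis
    unfolding Let_def
  proof
    show "distr P borel (\<lambda>\<omega>. (padd p (\<xi>1 \<omega>) (\<xi>2 \<omega>), padd p (\<xi>1 \<omega>) (pmult p (pmult p (pconst p p) c) (\<xi>2 \<omega>)))) =
      distr P borel (\<lambda>\<omega>. (padd p (\<xi>1 \<omega>) (\<xi>2 \<omega>), pneg p (padd p (\<xi>1 \<omega>) (pmult p (pmult p (pconst p p) c) (\<xi>2 \<omega>)))))"
      by (rule sym_part[OF assms(1,3,6-15) refl refl refl])
    show "\<not> idempotent_distr p (distr P borel \<xi>1)"
      by (rule not_idem[OF assms(1,2,4,5,12,13,14)])
  qed
qed

end
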